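(* In the Setting below and under the Standing Assumption, let $x\in\mathbb{Q}\cap D$ be such that the Lyapunov exponent $\lambda(x)$ exists. Then for every $p\in\mathbb{Z}$, $$\sigma(x,p)\ge\frac{\max(0,\lambda(x))}{\ln 2}.$$
   Context: Setting. $D\subseteq\mathbb{R}$ is a compact interval and $f:D\to D$ is twice continuously differentiable on $D$ with $f''$ bounded. For $x\in D$ the orbit is $x_0=x$, $x_{n+1}=f(x_n)$. A floating-point number of precision $m$ is a real $s\cdot 2^{e-m}$ with $s,e\in\mathbb{Z}$, $|s|\le 2^m-1$; $rd_m(y)$ denotes rounding of $y$ to a nearest floating-point number of precision $m$. Let $L(a,e):=\sup\{|f'(y)|: y\in[a-e,a+e]\cap D\}$ and fix a function $\bar L$ with $L(a,e)\le\bar L(a,e)\le\min(\bar L_{max},\,L(a,e)+Ke)$ for constants $\bar L_{max},K\ge0$. For $x\in\mathbb{Q}\cap D$ and precision $m\ge1$ the computed sequence is $\hat x_0=rd_m(x)$, $\bar e_0=2^{-m}|\hat x_0|$, $\hat x_{n+1}=rd_m(f(\hat x_n))$, $\bar e_{n+1}=\bar L(\hat x_n,\bar e_n)\bar e_n+2^{-m}|\hat x_{n+1}|$ (all $\hat x_n$ assumed in $D$). For $N\in\mathbb{N}$, $p\in\mathbb{Z}$, $m_{min}(x,N,p)$ is the least $m\ge1$ such that the sequence computed at precision $m$ satisfies $\bar e_n\le\frac{10^{-p}}{1+10^{-p}}|\hat x_n|$ for all $n=0,\dots,N$. $\sigma(x,p):=\limsup_{N\to\infty} m_{min}(x,N,p)/N$.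 Standing Assumption: $x_n\ne0$ for all $n$ and $\lim_{N\to\infty}\mathrm{ld}(\min\{|x_n|:0\le n\le N\})/N=0$, $\mathrm{ld}=\log_2$. The Lyapunov exponent is $\lambda(x):=\lim_{n\to\infty}\frac1n\sum_{k=0}^{n-1}\ln|f'(f^k(x))|$ when the limit exists. *)

theory Defs
  imports "HOL-Analysis.Analysis"
begin

definition is_float :: "nat \<Rightarrow> real \<Rightarrow> bool" where
  "is_float m y \<longleftrightarrow> (\<exists>s e :: int. y = real_of_int s * 2 powr (real_of_int e - real m)
                                   \<and> \<bar>s\<bar> \<le> 2 ^ m - 1)"

definition is_round_nearest :: "(nat \<Rightarrow> real \<Rightarrow> real) \<Rightarrow> bool" where
  "is_round_nearest rd \<longleftrightarrow>
     (\<forall>m y. m \<ge> 1 \<longrightarrow> is_float m (rd m y) \<and>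
        (\<forall>z. is_float m z \<longrightarrow> \<bar>rd m y - y\<bar> \<le> \<bar>z - y\<bar>))"

definition Lip :: "real set \<Rightarrow> (real \<Rightarrow> real) \<Rightarrow> real \<Rightarrow> real \<Rightarrow> real" where
  "Lip D f' a e = Sup {\<bar>f' y\<bar> | y. y \<in> {a - e..a + e} \<inter> D}"

fun comp_seq :: "(nat \<Rightarrow> real \<Rightarrow> real) \<Rightarrow> (real \<Rightarrow> real) \<Rightarrow> (real \<Rightarrow> real \<Rightarrow> real)
                  \<Rightarrow> nat \<Rightarrow> real \<Rightarrow> nat \<Rightarrow> real \<times> real" where
  "comp_seq rd f Lbar m x 0 = (rd m x, 2 powr (- real m) * \<bar>rd m x\<bar>)"
| "comp_seq rd f Lbar m x (Suc n) =
     (let (xh, e) = comp_seq rd f Lbar m x n; xh' = rd m (f xh)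
      in (xh', Lbar xh e * e + 2 powr (- real m) * \<bar>xh'\<bar>))"

definition m_min :: "(nat \<Rightarrow> real \<Rightarrow> real) \<Rightarrow> (real \<Rightarrow> real) \<Rightarrow> (real \<Rightarrow> real \<Rightarrow> real)
                  \<Rightarrow> real \<Rightarrow> nat \<Rightarrow> int \<Rightarrow> nat" where
  "m_min rd f Lbar x N p = (LEAST m. m \<ge> 1 \<and>
     (\<forall>n\<le>N. snd (comp_seq rd f Lbar m x n)
              \<le> 10 powr (- real_of_int p) / (1 + 10 powr (- real_of_int p))
                 * \<bar>fst (comp_seq rd f Lbar m x n)\<bar>))"

definition sigma :: "(nat \<Rightarrow> real \<Rightarrow> real) \<Rightarrow> (real \<Rightarrow> real) \<Rightarrow> (real \<Rightarrow> real \<Rightarrow> real)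
                  \<Rightarrow> real \<Rightarrow> int \<Rightarrow> ereal" where
  "sigma rd f Lbar x p = limsup (\<lambda>N. ereal (real (m_min rd f Lbar x N p) / real N))"

definition has_lyapunov :: "(real \<Rightarrow> real) \<Rightarrow> (real \<Rightarrow> real) \<Rightarrow> real \<Rightarrow> real \<Rightarrow> bool" where
  "has_lyapunov f f' x lam \<longleftrightarrow>
     (\<forall>k. f' ((f ^^ k) x) \<noteq> 0) \<and>
     (\<lambda>n. (1 / real n) * (\<Sum>k<n. ln \<bar>f' ((f ^^ k) x)\<bar>)) \<longlonglongrightarrow> lam"

end

theory Submission imports Defs begin

lemma is_float_int:
  assumes m: "m \<ge> 1" and j: "\<bar>j\<bar> \<le> (2::int) ^ m"
  shows "is_float m (real_of_int j * 2 powr (real_of_int e - real m))"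
proof (cases "\<bar>j\<bar> \<le> 2 ^ m - 1")
  case True then show ?thesis unfolding is_float_def by blast
next
  case False
  hence jj: "\<bar>j\<bar> = 2 ^ m" using j by linarith
  obtain n where n: "m = Suc n" using m by (cases m) auto
  have pm: "(2::int) ^ m = 2 * 2 ^ n" by (simp add: n)
  define s where "s = (if j \<ge> 0 then (2::int) ^ n else - (2 ^ n))"
  have s: "j = 2 * s" using jj pm unfolding s_def by (cases "j \<ge> 0") auto
  have p1: "(1::int) \<le> 2 ^ n" by simp
  have sb: "\<bar>s\<bar> \<le> 2 ^ m - 1" unfolding s_def pm using p1 by auto
  have ee: "real_of_int (e + 1) - real m = 1 + (real_of_int e - real m)" by simp
  have h: "(2::real) powr (real_of_int (e + 1) - real m) = 2 * 2 powr (real_of_int e - real m)"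
    unfolding ee by (simp add: powr_add)
  have "real_of_int j * 2 powr (real_of_int e - real m)
        = real_of_int s * 2 powr (real_of_int (e + 1) - real m)"
    unfolding h by (simp add: s)
  then show ?thesis unfolding is_float_def using sb by blast
qed

lemma round_err:
  assumes rd: "is_round_nearest rd" and m: "m \<ge> 1"
  shows "\<bar>rd m y - y\<bar> \<le> 2 powr (- real m) * \<bar>rd m y\<bar>"
proof -
  define r where "r = rd m y"
  have near: "\<And>z. is_float m z \<Longrightarrow> \<bar>r - y\<bar> \<le> \<bar>z - y\<bar>"
    using rd m unfolding is_round_nearest_def r_def by blast
  show ?thesis
  proof (cases "y = 0")
    case True
    have "is_float m 0" unfolding is_float_def by (rule exI[of _ 0], rule exI[of _ 0]) simp
    from near[OF this] True have "r = 0" by simp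
    thus ?thesis using True r_def by simp
  next
    case False
    define w where "w = \<bar>y\<bar>"
    have w0: "w > 0" using False w_def by simp
    define e where "e = \<lfloor>log 2 w\<rfloor> + 1"
    have lo: "2 powr (real_of_int e - 1) \<le> w"
    proof -
      have "2 powr (real_of_int e - 1) \<le> 2 powr (log 2 w)"
        by (rule powr_mono) (auto simp: e_def)
      thus ?thesis using w0 by simp
    qed
    have hi: "w < 2 powr (real_of_int e)"
    proof -
      have "2 powr (log 2 w) < 2 powr (real_of_int e)"
        by (rule powr_less_mono) (auto simp: e_def)
      thus ?thesis using w0 by simp
    qed
    define u where "u = 2 powr (real_of_int e - real m)"
    have u0: "u > 0" by (simp add: u_def)
    define sg where "sg = (if y > 0 then 1 else -1 :: int)"
    have ysg: "y = real_of_int sg * w" using False by (simp add: sg_def w_def)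
    have sgabs: "\<bar>sg\<bar> = 1" by (simp add: sg_def)
    have wu_hi: "w / u < 2 ^ m"
    proof -
      have "w / u < 2 powr (real_of_int e) / u" using hi u0 by (simp add: divide_strict_right_mono)
      also have "\<dots> = 2 powr (real m)" by (simp add: u_def powr_diff[symmetric])
      also have "\<dots> = 2 ^ m" by (simp add: powr_realpow)
      finally show ?thesis .
    qed
    define k where "k = \<lfloor>w / u + 1/2\<rfloor>"
    have k1: "\<bar>real_of_int k - w / u\<bar> \<le> 1/2" unfolding k_def by linarith
    have k0: "k \<ge> 0" unfolding k_def using w0 u0 by simp
    have k2: "k \<le> 2 ^ m"
    proof -
      have "real_of_int k < 2 ^ m + 1" using k1 wu_hi by linarith
      hence "real_of_int k < real_of_int (2 ^ m + 1)" by simp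
      hence "k < 2 ^ m + 1" by (simp only: of_int_less_iff)
      thus ?thesis by linarith
    qed
    define z where "z = real_of_int (sg * k) * u"
    have zf: "is_float m z" unfolding z_def u_def
      by (rule is_float_int[OF m]) (simp add: abs_mult sgabs k0 k2)
    have rsg: "\<bar>real_of_int sg\<bar> = 1" by (simp add: sg_def)
    have "z - y = real_of_int sg * (real_of_int k * u - w)" unfolding z_def ysg by (simp add: algebra_simps)
    hence "\<bar>z - y\<bar> = \<bar>real_of_int k * u - w\<bar>" by (simp add: abs_mult rsg)
    also have "\<dots> = \<bar>(real_of_int k - w / u) * u\<bar>" using u0
      by (simp add: left_diff_distrib)
    also have "\<dots> = \<bar>real_of_int k - w / u\<bar> * u" using u0 by (simp add: abs_mult)
    also have "\<dots> \<le> 1/2 * u" by (rule mult_right_mono[OF k1]) (use u0 in simp)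
    also have "\<dots> = u / 2" by simp
    finally have err: "\<bar>r - y\<bar> \<le> u / 2" using near[OF zf] by linarith
    define z0 where "z0 = real_of_int (sg * 2 ^ (m - 1)) * u"
    have z0f: "is_float m z0" unfolding z0_def u_def
      by (rule is_float_int[OF m]) (simp add: abs_mult sgabs)
    have z0v: "2 ^ (m - 1) * u = 2 powr (real_of_int e - 1)"
    proof -
      have e1: "real (m - 1) = real m - 1" using m by simp
      have "(2::real) ^ (m - 1) = 2 powr (real m - 1)"
        unfolding e1[symmetric] by (rule powr_realpow[symmetric]) simp
      thus ?thesis by (simp add: u_def powr_add[symmetric])
    qed
    have "\<bar>z0 - y\<bar> = w - 2 powr (real_of_int e - 1)"
    proof -
      have "z0 - y = real_of_int sg * (2 ^ (m - 1) * u - w)" unfolding z0_def ysg by (simp add: algebra_simps)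
      hence "\<bar>z0 - y\<bar> = \<bar>2 ^ (m - 1) * u - w\<bar>" by (simp add: abs_mult rsg)
      thus ?thesis using z0v lo by simp
    qed
    with near[OF z0f] have "\<bar>r - y\<bar> \<le> w - 2 powr (real_of_int e - 1)" by simp
    hence rbig: "\<bar>r\<bar> \<ge> 2 powr (real_of_int e - 1)" using w_def by linarith
    have "2 powr (- real m) * 2 powr (real_of_int e - 1) = 2 powr (real_of_int e - real m - 1)"
      by (simp add: powr_add[symmetric] algebra_simps)
    also have "\<dots> = u / 2" by (simp add: u_def powr_diff)
    finally have "u / 2 = 2 powr (- real m) * 2 powr (real_of_int e - 1)" by simp
    also have "\<dots> \<le> 2 powr (- real m) * \<bar>r\<bar>" using rbig by simp
    finally have "u / 2 \<le> 2 powr (- real m) * \<bar>r\<bar>" .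
    with err have "\<bar>r - y\<bar> \<le> 2 powr (- real m) * \<bar>r\<bar>" by (rule order_trans)
    thus ?thesis by (simp add: r_def)
  qed
qed
theorem mainTheorem6:
  fixes a b :: real and f f' f'' :: "real \<Rightarrow> real"
    and rd :: "nat \<Rightarrow> real \<Rightarrow> real" and Lbar :: "real \<Rightarrow> real \<Rightarrow> real"
    and Lmax K x lam :: real and p :: int
  assumes ab: "a < b"
    and f_maps: "\<forall>y\<in>{a..b}. f y \<in> {a..b}"
    and f_deriv: "\<forall>y\<in>{a..b}. (f has_real_derivative f' y) (at y within {a..b})"
    and f'_deriv: "\<forall>y\<in>{a..b}. (f' has_real_derivative f'' y) (at y within {a..b})"
    and f''_cont: "continuous_on {a..b} f''"
    and f''_bdd: "bounded (f'' ` {a..b})"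
    and rd: "is_round_nearest rd"
    and Lmax: "Lmax \<ge> 0" and K: "K \<ge> 0"
    and Lbar: "\<forall>a'\<in>{a..b}. \<forall>e\<ge>0. Lip {a..b} f' a' e \<le> Lbar a' e
                 \<and> Lbar a' e \<le> min Lmax (Lip {a..b} f' a' e + K * e)"
    and x_rat: "x \<in> \<rat>" and x_D: "x \<in> {a..b}"
    and comp_D: "\<forall>m\<ge>1. \<forall>n. fst (comp_seq rd f Lbar m x n) \<in> {a..b}"
    and nonzero: "\<forall>n. (f ^^ n) x \<noteq> 0"
    and min_growth: "(\<lambda>N. log 2 (Min ((\<lambda>n. \<bar>(f ^^ n) x\<bar>) ` {0..N})) / real N) \<longlonglongrightarrow> 0"
    and lyap: "has_lyapunov f f' x lam"
  shows "sigma rd f Lbar x p \<ge> ereal (max 0 lam / ln 2)"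
proof -
  define X where "X = (\<lambda>m n. fst (comp_seq rd f Lbar m x n))"
  define E where "E = (\<lambda>m n. snd (comp_seq rd f Lbar m x n))"
  define xs where "xs = (\<lambda>n. (f ^^ n) x)"
  define B where "B = max \<bar>a\<bar> \<bar>b\<bar>"
  have X0: "X m 0 = rd m x" for m by (simp add: X_def)
  have E0: "E m 0 = 2 powr (- real m) * \<bar>X m 0\<bar>" for m by (simp add: E_def X_def)
  have XS: "X m (Suc n) = rd m (f (X m n))" for m n
    by (simp add: X_def split_beta Let_def)
  have ES: "E m (Suc n) = Lbar (X m n) (E m n) * E m n + 2 powr (- real m) * \<bar>X m (Suc n)\<bar>" for m n
    by (simp add: X_def E_def split_beta Let_def)
  have XD: "m \<ge> 1 \<Longrightarrow> X m n \<in> {a..b}" for m n using comp_D X_def by simp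
  have xsS: "xs (Suc n) = f (xs n)" for n by (simp add: xs_def)
  have xsD: "xs n \<in> {a..b}" for n
    by (induction n) (use x_D f_maps in \<open>auto simp: xs_def\<close>)
  have Bb: "y \<in> {a..b} \<Longrightarrow> \<bar>y\<bar> \<le> B" for y by (auto simp: B_def)
  have xne: "x \<noteq> 0" using nonzero[rule_format, of 0] by simp
  have Bpos: "B > 0" using Bb[OF x_D] xne by linarith
  have pw: "2 powr (- real m) = (1/2::real) ^ m" for m
    by (simp add: powr_minus powr_realpow power_one_over inverse_eq_divide)
  have contf': "continuous_on {a..b} f'"
    using f'_deriv by (meson DERIV_continuous continuous_on_eq_continuous_within)
  obtain Mf where Mf: "\<forall>y\<in>{a..b}. \<bar>f' y\<bar> \<le> Mf"
    using compact_imp_bounded[OF compact_continuous_image[OF contf' compact_Icc]]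
    unfolding bounded_iff by auto
  have Lip_ge: "y \<in> {a'-e..a'+e} \<Longrightarrow> y \<in> {a..b} \<Longrightarrow> \<bar>f' y\<bar> \<le> Lip {a..b} f' a' e" for y a' e
    unfolding Lip_def by (rule cSup_upper) (use Mf in \<open>auto intro!: bdd_aboveI[where M=Mf]\<close>)
  have Lb: "a' \<in> {a..b} \<Longrightarrow> e \<ge> 0 \<Longrightarrow> Lip {a..b} f' a' e \<le> Lbar a' e \<and> Lbar a' e \<le> Lmax" for a' e
    using Lbar by fastforce
  have mvt: "\<bar>f u - f v\<bar> \<le> Lip {a..b} f' u e * \<bar>u - v\<bar>"
    if uv: "u \<in> {a..b}" "v \<in> {a..b}" "\<bar>u - v\<bar> \<le> e" for u v e
  proof -
    let ?S = "{min u v..max u v}"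
    have sub: "?S \<subseteq> {a..b}" using uv by auto
    have cv: "convex ?S" by simp
    have df: "(f has_field_derivative f' z) (at z within ?S)" if z: "z \<in> ?S" for z
      using f_deriv sub z by (meson DERIV_subset subsetD)
    have dn: "norm (f' z) \<le> Lip {a..b} f' u e" if z: "z \<in> ?S" for z
    proof -
      have "u - e \<le> z \<and> z \<le> u + e" using z uv(3) by (cases "u \<le> v") (auto simp: abs_le_iff)
      moreover have "a \<le> z \<and> z \<le> b" using z sub by auto
      ultimately show ?thesis using Lip_ge[of z u e] by auto
    qed
    have "norm (f u - f v) \<le> Lip {a..b} f' u e * norm (u - v)"
      by (rule field_differentiable_bound[OF cv df dn]) auto
    thus ?thesis by simp
  qed
  have valid: "\<bar>X m n - xs n\<bar> \<le> E m n" if m: "m \<ge> 1" for m n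
  proof (induction n)
    case 0 show ?case using round_err[OF rd m, of x] by (simp add: X0 E0 xs_def)
  next
    case (Suc n)
    have En: "E m n \<ge> 0" using Suc by (meson abs_ge_zero order_trans)
    have LipN: "0 \<le> Lip {a..b} f' (X m n) (E m n)"
      using Lip_ge[of "X m n" "X m n" "E m n"] En XD[OF m] by auto
    have "\<bar>X m (Suc n) - xs (Suc n)\<bar> \<le> \<bar>rd m (f (X m n)) - f (X m n)\<bar> + \<bar>f (X m n) - f (xs n)\<bar>"
      by (simp add: XS xsS)
    also have "\<dots> \<le> 2 powr (-real m) * \<bar>X m (Suc n)\<bar> + Lip {a..b} f' (X m n) (E m n) * \<bar>X m n - xs n\<bar>"
      using round_err[OF rd m, of "f (X m n)"] mvt[OF XD[OF m] xsD Suc.IH] by (simp add: XS)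
    also have "\<dots> \<le> 2 powr (-real m) * \<bar>X m (Suc n)\<bar> + Lip {a..b} f' (X m n) (E m n) * E m n"
      using Suc.IH LipN by (simp add: mult_left_mono)
    also have "\<dots> \<le> 2 powr (-real m) * \<bar>X m (Suc n)\<bar> + Lbar (X m n) (E m n) * E m n"
      using Lb[OF XD[OF m] En] En by (simp add: mult_right_mono)
    also have "\<dots> = E m (Suc n)" by (simp add: ES)
    finally show ?case .
  qed
  have Enn: "m \<ge> 1 \<Longrightarrow> E m n \<ge> 0" for m n using valid[of m n] by (meson abs_ge_zero order_trans)
  have lower: "E m 0 * (\<Prod>k<n. \<bar>f' (xs k)\<bar>) \<le> E m n" if m: "m \<ge> 1" for m n
  proof (induction n)
    case 0 show ?case by simp
  next
    case (Suc n)
    have "E m 0 * (\<Prod>k<Suc n. \<bar>f' (xs k)\<bar>) = \<bar>f' (xs n)\<bar> * (E m 0 * (\<Prod>k<n. \<bar>f' (xs k)\<bar>))"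
      by (simp add: ac_simps)
    also have "\<dots> \<le> \<bar>f' (xs n)\<bar> * E m n" using Suc by (simp add: mult_left_mono)
    also have "\<dots> \<le> Lip {a..b} f' (X m n) (E m n) * E m n"
    proof (rule mult_right_mono)
      show "\<bar>f' (xs n)\<bar> \<le> Lip {a..b} f' (X m n) (E m n)"
        using Lip_ge[of "xs n" "X m n" "E m n"] valid[OF m, of n] xsD[of n] by (auto simp: abs_le_iff)
    qed (use Enn[OF m] in auto)
    also have "\<dots> \<le> Lbar (X m n) (E m n) * E m n"
      using Lb[OF XD[OF m] Enn[OF m]] Enn[OF m] by (simp add: mult_right_mono)
    also have "\<dots> \<le> E m (Suc n)" by (simp add: ES)
    finally show ?case .
  qed
  have upper: "E m n \<le> 2 powr (- real m) * B * (1 + Lmax) ^ n" if m: "m \<ge> 1" for m n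
  proof (induction n)
    case 0 show ?case using Bb[OF XD[OF m]] by (simp add: E0 mult_left_mono)
  next
    case (Suc n)
    have p0: "0 \<le> 2 powr (- real m) * B" using Bpos by simp
    have q1: "1 \<le> (1 + Lmax) ^ n" using Lmax by simp
    have "E m (Suc n) = Lbar (X m n) (E m n) * E m n + 2 powr (- real m) * \<bar>X m (Suc n)\<bar>" by (rule ES)
    also have "\<dots> \<le> Lmax * E m n + 2 powr (- real m) * B"
      using Lb[OF XD[OF m] Enn[OF m]] Enn[OF m] Bb[OF XD[OF m]]
      by (intro add_mono mult_right_mono mult_left_mono) auto
    also have "\<dots> \<le> Lmax * (2 powr (- real m) * B * (1 + Lmax) ^ n) + 2 powr (- real m) * B * (1 + Lmax) ^ n"
      using Suc Lmax p0 q1 by (intro add_mono mult_left_mono) (auto simp: mult_le_cancel_left1)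
    also have "\<dots> = 2 powr (- real m) * B * (1 + Lmax) ^ Suc n" by (simp add: algebra_simps)
    finally show ?case .
  qed
  define t where "t = (10::real) powr (- real_of_int p)"
  define c where "c = t / (1 + t)"
  have t0: "t > 0" by (simp add: t_def)
  have c0: "c > 0" and c1: "c < 1" using t0 by (auto simp: c_def field_simps)
  have mm: "m_min rd f Lbar x N p = (LEAST m. m \<ge> 1 \<and> (\<forall>n\<le>N. E m n \<le> c * \<bar>X m n\<bar>))" for N
    by (simp add: m_min_def E_def X_def c_def t_def)
  have ex: "\<exists>m. m \<ge> 1 \<and> (\<forall>n\<le>N. E m n \<le> c * \<bar>X m n\<bar>)" for N
  proof -
    define \<mu> where "\<mu> = Min ((\<lambda>n. \<bar>xs n\<bar>) ` {0..N})"
    have \<mu>le: "\<mu> \<le> \<bar>xs n\<bar>" if "n \<le> N" for n unfolding \<mu>_def using that by (intro Min_le) auto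
    have \<mu>0: "\<mu> > 0" unfolding \<mu>_def using nonzero by (subst Min_gr_iff) (auto simp: xs_def)
    define G where "G = B * (1 + Lmax) ^ N"
    have G0: "G > 0" using Bpos Lmax by (simp add: G_def)
    obtain k where k: "(1/2::real) ^ k < c * \<mu> / (2 * G)"
      using real_arch_pow_inv[of "c * \<mu> / (2 * G)" "1/2"] c0 \<mu>0 G0 by auto
    define m where "m = Suc k"
    have m1: "m \<ge> 1" by (simp add: m_def)
    have small: "2 powr (- real m) * G * 2 \<le> c * \<mu>"
    proof -
      have "2 powr (- real m) = (1/2) ^ Suc k" unfolding m_def by (rule pw)
      also have "\<dots> \<le> (1/2) ^ k" by simp
      finally have "2 powr (- real m) \<le> c * \<mu> / (2 * G)" using k by linarith
      thus ?thesis using G0 by (simp add: field_simps)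
    qed
    have "E m n \<le> c * \<bar>X m n\<bar>" if n: "n \<le> N" for n
    proof -
      have q: "(1 + Lmax) ^ n \<le> (1 + Lmax) ^ N" using Lmax n by (intro power_increasing) auto
      have "E m n \<le> 2 powr (- real m) * B * (1 + Lmax) ^ n" by (rule upper[OF m1])
      also have "\<dots> \<le> 2 powr (- real m) * G" unfolding G_def using q Bpos
        by (simp add: mult_left_mono)
      finally have e1: "2 * E m n \<le> c * \<mu>" using small by linarith
      have "\<bar>X m n\<bar> \<ge> \<bar>xs n\<bar> - E m n" using valid[OF m1, of n] by linarith
      hence "c * \<bar>X m n\<bar> \<ge> c * (\<mu> - E m n)" using \<mu>le[OF n] c0
        by (intro mult_left_mono) auto
      moreover have "c * E m n \<le> E m n" by (rule mult_left_le_one_le) (use c0 c1 Enn[OF m1, of n] in auto)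
      ultimately show ?thesis using e1 by (simp add: right_diff_distrib)
    qed
    thus ?thesis using m1 by blast
  qed
  define S where "S = (\<lambda>N. \<Sum>k<N. ln \<bar>f' (xs k)\<bar>)"
  define C where "C = ln (\<bar>x\<bar> / 2) - ln B"
  have f'ne: "f' (xs k) \<noteq> 0" for k using lyap unfolding has_lyapunov_def xs_def by blast
  have key: "real (m_min rd f Lbar x N p) * ln 2 \<ge> S N + C" for N
  proof -
    define m where "m = m_min rd f Lbar x N p"
    have Q: "m \<ge> 1 \<and> (\<forall>n\<le>N. E m n \<le> c * \<bar>X m n\<bar>)"
      unfolding m_def mm by (rule LeastI_ex[OF ex])
    hence m1: "m \<ge> 1" by simp
    have EN: "E m N \<le> B"
    proof -
      have "E m N \<le> c * \<bar>X m N\<bar>" using Q by simp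
      also have "\<dots> \<le> \<bar>X m N\<bar>" by (rule mult_left_le_one_le) (use c0 c1 in auto)
      also have "\<dots> \<le> B" using Bb[OF XD[OF m1]] .
      finally show ?thesis .
    qed
    have pm: "2 powr (- real m) \<le> 1/2"
    proof -
      have "(1/2::real) ^ m \<le> (1/2) ^ 1" using m1 by (intro power_decreasing) auto
      thus ?thesis by (simp add: pw)
    qed
    have X0b: "\<bar>x\<bar> / 2 \<le> \<bar>X m 0\<bar>"
    proof -
      have "\<bar>X m 0 - x\<bar> \<le> E m 0" using valid[OF m1, of 0] by (simp add: xs_def)
      moreover have "E m 0 \<le> 1/2 * \<bar>X m 0\<bar>" unfolding E0 using pm by (rule mult_right_mono) simp
      ultimately show ?thesis by linarith
    qed
    define P where "P = (\<Prod>k<N. \<bar>f' (xs k)\<bar>)"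
    have P0: "P > 0" unfolding P_def using f'ne by (simp add: prod_pos)
    have "2 powr (- real m) * (\<bar>x\<bar> / 2) * P \<le> 2 powr (- real m) * \<bar>X m 0\<bar> * P"
      using X0b P0 by (simp add: mult_left_mono mult_right_mono)
    also have "\<dots> \<le> E m N" using lower[OF m1, of N] by (simp add: E0 P_def)
    also have "\<dots> \<le> B" by (rule EN)
    finally have ineq: "2 powr (- real m) * (\<bar>x\<bar> / 2) * P \<le> B" .
    have pos: "0 < 2 powr (- real m) * (\<bar>x\<bar> / 2) * P" using xne P0 by simp
    have "ln (2 powr (- real m) * (\<bar>x\<bar> / 2) * P) \<le> ln B" using ineq pos by simp
    moreover have "ln (2 powr (- real m) * (\<bar>x\<bar> / 2) * P) = - real m * ln 2 + ln (\<bar>x\<bar> / 2) + S N"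
    proof -
      have "ln P = S N" unfolding P_def S_def using f'ne by (simp add: ln_prod)
      moreover have "ln (2 powr (- real m) * (\<bar>x\<bar> / 2) * P) = ln (2 powr (- real m)) + ln (\<bar>x\<bar> / 2) + ln P"
      proof -
        define A where "A = 2 powr (- real m)"
        define Bx where "Bx = \<bar>x\<bar> / 2"
        have "A > 0" "Bx > 0" using xne by (auto simp: A_def Bx_def)
        hence "ln (A * Bx * P) = ln A + ln Bx + ln P"
          using ln_mult[of "A*Bx" P] ln_mult[of A Bx] P0 by simp
        thus ?thesis unfolding A_def Bx_def .
      qed
      ultimately show ?thesis by simp
    qed
    ultimately show ?thesis unfolding m_def C_def by linarith
  qed
  define g where "g = (\<lambda>N. max 0 ((1 / real N * S N + C / real N) / ln 2))"
  have glim: "g \<longlonglongrightarrow> max 0 lam / ln 2"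
  proof -
    have l1: "(\<lambda>N. 1 / real N * S N) \<longlonglongrightarrow> lam"
      using lyap unfolding has_lyapunov_def S_def xs_def by blast
    have "g \<longlonglongrightarrow> max 0 ((lam + 0) / ln 2)"
      unfolding g_def by (intro tendsto_intros l1) auto
    moreover have "max 0 ((lam + 0) / ln 2) = max 0 lam / ln 2"
    proof -
      have l2: "ln 2 > (0::real)" by simp
      show ?thesis using l2 divide_neg_pos[of lam "ln 2"] divide_nonneg_pos[of lam "ln 2"]
        by (auto simp: max_def)
    qed
    ultimately show ?thesis by simp
  qed
  have ev: "eventually (\<lambda>N. ereal (g N) \<le> ereal (real (m_min rd f Lbar x N p) / real N)) sequentially"
  proof (rule eventually_sequentiallyI[of 1])
    fix N :: nat assume N: "N \<ge> 1"
    have Np: "real N > 0" using N by simp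
    have l2: "ln 2 > (0::real)" by simp
    have "(1 / real N * S N + C / real N) / ln 2 = (S N + C) / (real N * ln 2)"
      using Np by (simp add: field_simps)
    also have "\<dots> \<le> real (m_min rd f Lbar x N p) * ln 2 / (real N * ln 2)"
      using key[of N] Np l2 by (intro divide_right_mono) auto
    also have "\<dots> = real (m_min rd f Lbar x N p) / real N" using l2 by simp
    finally have "(1 / real N * S N + C / real N) / ln 2 \<le> real (m_min rd f Lbar x N p) / real N" .
    thus "ereal (g N) \<le> ereal (real (m_min rd f Lbar x N p) / real N)"
      unfolding g_def by simp
  qed
  have "ereal (max 0 lam / ln 2) = limsup (\<lambda>N. ereal (g N))"
    by (rule lim_imp_Limsup[symmetric]) (auto intro: glim)
  also have "\<dots> \<le> sigma rd f Lbar x p"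
    unfolding sigma_def by (rule Limsup_mono[OF ev])
  finally show ?thesis .
qed

end
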